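(* Let $n\ge2$, $m=n-1$, $c\in\mathbb{R}^{m^2}$, and let $\overline{Q}_1$ be the polytope defined by constraints (1)–(8): (1) $\sum_{r=1}^m w_{ir}=1$, $i=1,\dots,m$; (2) $\sum_{i=1}^m w_{ir}=1$, $r=1,\dots,m$; (3) $w_{ir}\ge0$; (4) $y_{0,i}=w_{i,1}$; (5) $y_{i,0}=w_{i,m}$; (6) $w_{ir}+w_{j,r+1}-y_{ij}\le1$ for $i\ne j\in\{1,\dots,m\}$, $r\le m-1$; (7) $\sum_{i=1}^m\sum_{j\ne i,j=1}^m y_{ij}=m-1$; (8) $y_{ij}\ge0$ for all distinct $i,j\in\{0,\dots,m\}$. Then $(w^*,y^* )$ is an optimal solution of the problem $\min\{\sum_{i,r}c_{ir}w_{ir}:(w,y)\in\overline{Q}_1\}$ if and only if $(w^*,y^* )\in\overline{Q}_1$ and $w^*$ is an optimal solution of $\min\{c^t w: w\in\mathcal{A}_n\}$.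
   Context: $\mathcal{A}_n\subseteq\mathbb{R}^{m^2}$ is the linear assignment (Birkhoff) polytope, the set of $w$ satisfying (1)–(3). $y$ is indexed by ordered pairs of distinct elements of $\{0,1,\dots,m\}$. *)

theory Defs
  imports Main "HOL-Library.Library"
begin

definition assign_poly :: "nat \<Rightarrow> (nat \<Rightarrow> nat \<Rightarrow> real) set" where
  "assign_poly m = {w.
     (\<forall>i\<in>{1..m}. (\<Sum>r=1..m. w i r) = 1) \<and>
     (\<forall>r\<in>{1..m}. (\<Sum>i=1..m. w i r) = 1) \<and>
     (\<forall>i\<in>{1..m}. \<forall>r\<in>{1..m}. w i r \<ge> 0)}"

definition Q1bar :: "nat \<Rightarrow> ((nat \<Rightarrow> nat \<Rightarrow> real) \<times> (nat \<Rightarrow> nat \<Rightarrow> real)) set" where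
  "Q1bar m = {(w, y).
     w \<in> assign_poly m \<and>
     (\<forall>i\<in>{1..m}. y 0 i = w i 1) \<and>
     (\<forall>i\<in>{1..m}. y i 0 = w i m) \<and>
     (\<forall>i\<in>{1..m}. \<forall>j\<in>{1..m}. \<forall>r\<in>{1..m-1}. i \<noteq> j \<longrightarrow>
         w i r + w j (r+1) - y i j \<le> 1) \<and>
     (\<Sum>i=1..m. \<Sum>j\<in>{1..m}-{i}. y i j) = real m - 1 \<and>
     (\<forall>i\<in>{0..m}. \<forall>j\<in>{0..m}. i \<noteq> j \<longrightarrow> y i j \<ge> 0)}"

definition lin_cost :: "nat \<Rightarrow> (nat \<Rightarrow> nat \<Rightarrow> real) \<Rightarrow> (nat \<Rightarrow> nat \<Rightarrow> real) \<Rightarrow> real" where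
  "lin_cost m c w = (\<Sum>i=1..m. \<Sum>r=1..m. c i r * w i r)"

end

theory Submission
  imports Defs
begin

lemma exists_y:
  fixes w :: "nat \<Rightarrow> nat \<Rightarrow> real"
  assumes w: "w \<in> assign_poly m" and m1: "m \<ge> 1"
  shows "\<exists>y. (w, y) \<in> Q1bar m"
proof -
  have rs: "\<And>i. i\<in>{1..m} \<Longrightarrow> (\<Sum>r=1..m. w i r) = 1"
    and cs: "\<And>r. r\<in>{1..m} \<Longrightarrow> (\<Sum>i=1..m. w i r) = 1"
    and nn: "\<And>i r. i\<in>{1..m} \<Longrightarrow> r\<in>{1..m} \<Longrightarrow> w i r \<ge> 0"
    using w unfolding assign_poly_def by auto
  define P where "P i j = (\<Sum>r=1..m-1. w i r * w j (r+1))" for i j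
  define S where "S = (\<Sum>i=1..m. \<Sum>j\<in>{1..m}-{i}. P i j)"
  define E where "E = real m - 1 - S"
  define y where "y i j = (if i = 0 then w j 1 else if j = 0 then w i m
      else P i j + (if i = 1 \<and> j = 2 then E else 0))" for i j
  have Pnn: "P i j \<ge> 0" if "i\<in>{1..m}" "j\<in>{1..m}" for i j
    unfolding P_def using that by (intro sum_nonneg) (auto intro!: mult_nonneg_nonneg nn)
  have full: "(\<Sum>i=1..m. \<Sum>j=1..m. P i j) = real m - 1"
  proof -
    have "(\<Sum>i=1..m. \<Sum>j=1..m. P i j) = (\<Sum>r=1..m-1. \<Sum>i=1..m. \<Sum>j=1..m. w i r * w j (r+1))"
    proof -
      have "(\<Sum>i=1..m. \<Sum>j=1..m. P i j) = (\<Sum>i=1..m. \<Sum>r=1..m-1. \<Sum>j=1..m. w i r * w j (r+1))"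
        unfolding P_def by (rule sum.cong[OF refl]) (rule sum.swap)
      also have "\<dots> = (\<Sum>r=1..m-1. \<Sum>i=1..m. \<Sum>j=1..m. w i r * w j (r+1))"
        by (rule sum.swap)
      finally show ?thesis .
    qed
    also have "\<dots> = (\<Sum>r=1..m-1. (\<Sum>i=1..m. w i r) * (\<Sum>j=1..m. w j (r+1)))"
      by (simp add: sum_product)
    also have "\<dots> = (\<Sum>r=1..m-1. 1)"
    proof (rule sum.cong[OF refl])
      fix r assume "r \<in> {1..m-1}"
      hence "r \<in> {1..m}" "r+1 \<in> {1..m}" by auto
      thus "(\<Sum>i=1..m. w i r) * (\<Sum>j=1..m. w j (r+1)) = 1" using cs by simp
    qed
    also have "\<dots> = real m - 1" using m1 by simp
    finally show ?thesis .
  qed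
  have "S \<le> (\<Sum>i=1..m. \<Sum>j=1..m. P i j)"
    unfolding S_def by (intro sum_mono sum_mono2) (auto intro: Pnn)
  hence Enn: "E \<ge> 0" using full E_def by simp
  have E0: "E = 0" if "m < 2"
  proof -
    have "m = 1" using that m1 by simp
    thus ?thesis unfolding E_def S_def by simp
  qed
  have ind: "(\<Sum>i=1..m. \<Sum>j\<in>{1..m}-{i}. (if i = 1 \<and> j = 2 then E else 0)) = E"
  proof (cases "m \<ge> 2")
    case True
    have "(\<Sum>i=1..m. \<Sum>j\<in>{1..m}-{i}. (if i = 1 \<and> j = 2 then E else 0))
        = (\<Sum>i=1..m. if i = 1 then E else 0)"
      using True by (intro sum.cong refl) (auto simp: sum.delta)
    also have "\<dots> = E" using True by (simp add: sum.delta)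
    finally show ?thesis .
  next
    case False thus ?thesis using E0 by simp
  qed
  have sumy: "(\<Sum>i=1..m. \<Sum>j\<in>{1..m}-{i}. y i j) = real m - 1"
  proof -
    have "(\<Sum>i=1..m. \<Sum>j\<in>{1..m}-{i}. y i j)
       = (\<Sum>i=1..m. \<Sum>j\<in>{1..m}-{i}. P i j + (if i = 1 \<and> j = 2 then E else 0))"
      unfolding y_def by (intro sum.cong refl) auto
    also have "\<dots> = S + E" unfolding S_def using ind by (simp add: sum.distrib)
    finally show ?thesis using E_def by simp
  qed
  have c6: "w i r + w j (r+1) - y i j \<le> 1"
    if "i\<in>{1..m}" "j\<in>{1..m}" "r\<in>{1..m-1}" "i \<noteq> j" for i j r
  proof -
    have a: "0 \<le> w i r" "w i r \<le> 1" "0 \<le> w j (r+1)" "w j (r+1) \<le> 1"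
    proof -
      show "0 \<le> w i r" "0 \<le> w j (r+1)" using that nn by auto
      have "w i r \<le> (\<Sum>r'=1..m. w i r')"
        using that by (intro member_le_sum) (auto intro: nn)
      thus "w i r \<le> 1" using rs that by simp
      have "w j (r+1) \<le> (\<Sum>r'=1..m. w j r')"
        using that by (intro member_le_sum) (auto intro: nn)
      thus "w j (r+1) \<le> 1" using rs that by simp
    qed
    have "w i r * w j (r+1) \<le> P i j"
      unfolding P_def using that
      by (intro member_le_sum) (auto intro!: mult_nonneg_nonneg nn)
    moreover have "w i r + w j (r+1) - 1 \<le> w i r * w j (r+1)"
    proof -
      have "0 \<le> (1 - w i r) * (1 - w j (r+1))" using a by (intro mult_nonneg_nonneg) auto
      thus ?thesis by (simp add: algebra_simps)
    qed
    moreover have "P i j \<le> y i j" using that Enn unfolding y_def by auto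
    ultimately show ?thesis by linarith
  qed
  have c8: "y i j \<ge> 0" if "i\<in>{0..m}" "j\<in>{0..m}" "i \<noteq> j" for i j
    using that Enn Pnn m1 unfolding y_def by (auto intro!: nn add_nonneg_nonneg)
  have "(w, y) \<in> Q1bar m"
    unfolding Q1bar_def using w sumy c6 c8 by (auto simp: y_def)
  thus ?thesis by blast
qed

theorem lemma3:
  fixes n m :: nat and c ws ys :: "nat \<Rightarrow> nat \<Rightarrow> real"
  assumes "n \<ge> 2" and "m = n - 1"
  shows "((ws, ys) \<in> Q1bar m \<and>
          (\<forall>(w, y) \<in> Q1bar m. lin_cost m c ws \<le> lin_cost m c w))
         \<longleftrightarrow>
         ((ws, ys) \<in> Q1bar m \<and>
          ws \<in> assign_poly m \<and> (\<forall>w \<in> assign_poly m. lin_cost m c ws \<le> lin_cost m c w))"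
proof -
  have m1: "m \<ge> 1" using assms by simp
  have inA: "w \<in> assign_poly m" if "(w, y) \<in> Q1bar m" for w y
    using that unfolding Q1bar_def by auto
  show ?thesis
  proof
    assume H: "(ws, ys) \<in> Q1bar m \<and> (\<forall>(w, y) \<in> Q1bar m. lin_cost m c ws \<le> lin_cost m c w)"
    have "\<forall>w \<in> assign_poly m. lin_cost m c ws \<le> lin_cost m c w"
    proof
      fix w assume "w \<in> assign_poly m"
      then obtain y where "(w, y) \<in> Q1bar m" using exists_y m1 by blast
      thus "lin_cost m c ws \<le> lin_cost m c w" using H by auto
    qed
    thus "(ws, ys) \<in> Q1bar m \<and> ws \<in> assign_poly m \<and> (\<forall>w \<in> assign_poly m. lin_cost m c ws \<le> lin_cost m c w)"
      using H inA by blast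
  next
    assume H: "(ws, ys) \<in> Q1bar m \<and> ws \<in> assign_poly m \<and> (\<forall>w \<in> assign_poly m. lin_cost m c ws \<le> lin_cost m c w)"
    thus "(ws, ys) \<in> Q1bar m \<and> (\<forall>(w, y) \<in> Q1bar m. lin_cost m c ws \<le> lin_cost m c w)"
      using inA by auto
  qed
qed

end
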